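(* Let $X$ be a topological quandle. (1) If $X$ has the discrete topology, then $H_n(X)=C_n(X)$ for all $n$ (i.e. all boundary maps vanish, so $H_n(X)\cong C_n(X)$). (2) If the quandle structure of $X$ is trivial (i.e. $x\triangleright y=x$ for all $x,y$), then $H_n(X)=C_n(X)$ for all $n$.
   Context: A quandle is a set with a binary operation $\triangleright$ such that $x\triangleright x=x$, each $\beta_y(x)=x\triangleright y$ is bijective, and $(x\triangleright y)\triangleright z=(x\triangleright z)\triangleright(y\triangleright z)$. A topological quandle is a topological space with a continuous quandle operation such that every $\beta_y$ is a homeomorphism. Let $\Delta^n$ have vertices $e_0,\dots,e_n$ ($\Delta^{n-1}$ has vertices $\bar e_0,\dots,\bar e_{n-1}$). For a singular $n$-simplex $\sigma:\Delta^n\to X$ write $\sigma=\sigma_{[x_1,\dots,x_{n+1}]}$ with $x_i=\sigma(e_{i-1})$; singular simplices are combined pointwise by $(\sigma\triangleright\tau)(t)=\sigma(t)\triangleright\tau(t)$. $C_n(X)$ is the free abelian group on singular $n$-simplices. For $2\le i\le n+1$, $d_i\sigma$ is $\sigma$ restricted to the face omitting $e_{i-1}$ (via $\bar e_j\mapsto e_j$ for $j\le i-2$, $\bar e_j\mapsto e_{j+1}$ for $j\ge i-1$), and $s_i\sigma=\sigma\circ\iota_i$ with $\iota_i(\sum t_j\bar e_j)=(\sum_{k=0}^{i-2}t_k)e_{i-1}+\sum_{j=i-1}^{n-1}t_je_{j+1}$. The boundary is $\partial_n\sigma=\sum_{i=2}^{n+1}(-1)^i(d_i\sigma-d_i\sigma\triangleright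 s_i\sigma)$, extended linearly ($\partial_0=0$); $H_n(X)$ is the $n$-th homology of $(C_*(X),\partial)$. *)

theory Defs
  imports "HOL-Homology.Homology"
begin

definition quandle_on :: "'a set \<Rightarrow> ('a \<Rightarrow> 'a \<Rightarrow> 'a) \<Rightarrow> bool" where
  "quandle_on S q \<longleftrightarrow>
     (\<forall>x\<in>S. \<forall>y\<in>S. q x y \<in> S) \<and>
     (\<forall>x\<in>S. q x x = x) \<and>
     (\<forall>y\<in>S. bij_betw (\<lambda>x. q x y) S S) \<and>
     (\<forall>x\<in>S. \<forall>y\<in>S. \<forall>z\<in>S. q (q x y) z = q (q x z) (q y z))"

definition topological_quandle :: "'a topology \<Rightarrow> ('a \<Rightarrow> 'a \<Rightarrow> 'a) \<Rightarrow> bool" where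
  "topological_quandle X q \<longleftrightarrow>
     quandle_on (topspace X) q \<and>
     continuous_map (prod_topology X X) X (\<lambda>(x, y). q x y) \<and>
     (\<forall>y\<in>topspace X. homeomorphic_map X X (\<lambda>x. q x y))"

definition simplex_op :: "('a \<Rightarrow> 'a \<Rightarrow> 'a) \<Rightarrow> nat \<Rightarrow> ((nat \<Rightarrow> real) \<Rightarrow> 'a)
    \<Rightarrow> ((nat \<Rightarrow> real) \<Rightarrow> 'a) \<Rightarrow> (nat \<Rightarrow> real) \<Rightarrow> 'a" where
  "simplex_op q p \<sigma> \<tau> = restrict (\<lambda>t. q (\<sigma> t) (\<tau> t)) (standard_simplex p)"

text \<open>The map iota_i with k = i - 1: sends the first k vertices of the (n-1)-simplex to e_k,
  and vertex j (j \<ge> k) to e_(j+1).\<close>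
definition degen_map :: "nat \<Rightarrow> (nat \<Rightarrow> real) \<Rightarrow> nat \<Rightarrow> real" where
  "degen_map k t = (\<lambda>m. if m = k then sum t {..<k} else if k < m then t (m - 1) else 0)"

text \<open>s_i sigma for an n-simplex sigma, with k = i - 1.\<close>
definition singular_degen :: "nat \<Rightarrow> nat \<Rightarrow> ((nat \<Rightarrow> real) \<Rightarrow> 'a) \<Rightarrow> (nat \<Rightarrow> real) \<Rightarrow> 'a" where
  "singular_degen n k \<sigma> = restrict (\<sigma> \<circ> degen_map k) (standard_simplex (n - 1))"

text \<open>Quandle boundary: sum over i = 2..n+1 (k = i - 1 = 1..n) of
  (-1)^i (d_i sigma - d_i sigma \<triangleright> s_i sigma); d_i sigma = singular_face n (i-1) sigma.\<close>
definition quandle_boundary :: "('a \<Rightarrow> 'a \<Rightarrow> 'a) \<Rightarrow> nat \<Rightarrow> 'a chain \<Rightarrow> 'a chain" where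
  "quandle_boundary q n c =
     (if n = 0 then 0 else
      frag_extend (\<lambda>\<sigma>. \<Sum>k\<in>{1..n}. frag_cmul ((-1) ^ (k + 1))
          (frag_of (singular_face n k \<sigma>)
           - frag_of (simplex_op q (n - 1) (singular_face n k \<sigma>) (singular_degen n k \<sigma>)))) c)"

text \<open>C_n(X) is chain_group n X (free abelian group on singular n-simplices).
  Cycles, boundaries and homology H_n(X) = Z_n / B_n.\<close>
definition quandle_cycles :: "'a topology \<Rightarrow> ('a \<Rightarrow> 'a \<Rightarrow> 'a) \<Rightarrow> nat \<Rightarrow> 'a chain set" where
  "quandle_cycles X q n = {c \<in> carrier (chain_group n X). quandle_boundary q n c = 0}"

definition quandle_boundaries :: "'a topology \<Rightarrow> ('a \<Rightarrow> 'a \<Rightarrow> 'a) \<Rightarrow> nat \<Rightarrow> 'a chain set" where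
  "quandle_boundaries X q n = quandle_boundary q (Suc n) ` carrier (chain_group (Suc n) X)"

definition quandle_homology :: "'a topology \<Rightarrow> ('a \<Rightarrow> 'a \<Rightarrow> 'a) \<Rightarrow> nat \<Rightarrow> 'a chain set monoid" where
  "quandle_homology X q n =
     subgroup_generated (chain_group n X) (quandle_cycles X q n) Mod quandle_boundaries X q n"

end

theory Submission
  imports Defs
begin

lemma degen_map_in_standard_simplex:
  assumes "1 \<le> n" "k \<le> n" "t \<in> standard_simplex (n - 1)"
  shows "degen_map k t \<in> standard_simplex n"
proof -
  obtain n' where n: "n = Suc n'" using assms(1) by (cases n) auto
  have t0: "\<And>i. 0 \<le> t i" and t1: "\<And>i. i > n' \<Longrightarrow> t i = 0" and ts: "sum t {..n'} = 1"
    using assms(3) by (auto simp: standard_simplex_def n)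
  have kn: "k \<le> Suc n'" using assms n by simp
  have ts2: "sum t {..<k} + sum t {k..n'} = 1"
  proof (cases "k = Suc n'")
    case True then show ?thesis using ts by (simp add: lessThan_Suc_atMost)
  next
    case False
    then have split: "{..n'} = {..<k} \<union> {k..n'}" using kn by auto
    show ?thesis using ts by (simp add: split sum.union_disjoint ivl_disj_int)
  qed
  have s1: "sum (degen_map k t) {..<k} = 0" by (simp add: degen_map_def)
  have s2: "sum (degen_map k t) {k..Suc n'} = degen_map k t k + sum (degen_map k t) {Suc k..Suc n'}"
    by (rule sum.atLeast_Suc_atMost[OF kn])
  have s3: "sum (degen_map k t) {Suc k..Suc n'} = sum t {k..n'}"
    by (subst sum.shift_bounds_cl_Suc_ivl) (simp add: degen_map_def)
  have sp2: "{..Suc n'} = {..<k} \<union> {k..Suc n'}" using kn by auto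
  have tot: "sum (degen_map k t) {..n} = 1"
    unfolding n sp2 using s1 s2 s3 ts2
    by (subst sum.union_disjoint) (auto simp: degen_map_def)
  have nn: "\<And>i. 0 \<le> degen_map k t i"
    by (auto simp: degen_map_def t0 intro: sum_nonneg)
  have z: "\<And>i. i > n \<Longrightarrow> degen_map k t i = 0"
    using kn t1 n by (auto simp: degen_map_def)
  have le1: "\<And>i. degen_map k t i \<le> 1"
  proof -
    fix i
    show "degen_map k t i \<le> 1"
    proof (cases "i \<le> n")
      case True
      have "degen_map k t i \<le> sum (degen_map k t) {..n}"
        using True nn by (intro member_le_sum) auto
      then show ?thesis using tot by simp
    next
      case False then show ?thesis using z by simp
    qed
  qed
  show ?thesis using nn le1 z tot by (simp add: standard_simplex_def)
qed

lemma boundary_zero_if: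
  assumes H: "\<And>\<sigma> k t. singular_simplex n X \<sigma> \<Longrightarrow> 1 \<le> n \<Longrightarrow> k \<in> {1..n} \<Longrightarrow>
      t \<in> standard_simplex (n - 1) \<Longrightarrow>
      q (\<sigma> (simplical_face k t)) (\<sigma> (degen_map k t)) = \<sigma> (simplical_face k t)"
  and c: "c \<in> carrier (chain_group n X)"
  shows "quandle_boundary q n c = 0"
proof (cases "n = 0")
  case True then show ?thesis by (simp add: quandle_boundary_def)
next
  case False
  show ?thesis unfolding quandle_boundary_def if_not_P[OF False]
  proof (intro frag_extend_eq_0 sum.neutral ballI)
    fix \<sigma> k
    assume s: "\<sigma> \<in> Poly_Mapping.keys c" and k: "k \<in> {1..n}"
    have ss: "singular_simplex n X \<sigma>" using s c by (auto simp: singular_chain_def)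
    have eq: "simplex_op q (n - Suc 0) (singular_face n k \<sigma>) (singular_degen n k \<sigma>) = singular_face n k \<sigma>"
      unfolding simplex_op_def singular_face_def singular_degen_def
      using H[OF ss _ k] False by (auto intro!: restrict_ext)
    show "frag_cmul ((- 1) ^ (k + 1)) (frag_of (singular_face n k \<sigma>) -
          frag_of (simplex_op q (n - 1) (singular_face n k \<sigma>) (singular_degen n k \<sigma>))) = 0"
      by (simp add: eq)
  qed
qed

lemma homology_iso_if:
  assumes "\<And>c. c \<in> carrier (chain_group n X) \<Longrightarrow> quandle_boundary q n c = 0"
    and "\<And>c. c \<in> carrier (chain_group (Suc n) X) \<Longrightarrow> quandle_boundary q (Suc n) c = 0"
  shows "quandle_homology X q n \<cong> chain_group n X"
proof -
  interpret G: group "chain_group n X" by simp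
  have cy: "quandle_cycles X q n = carrier (chain_group n X)"
    using assms(1) by (auto simp: quandle_cycles_def)
  have "0 \<in> carrier (chain_group (Suc n) X)" by simp
  then have bd: "quandle_boundaries X q n = {\<one>\<^bsub>chain_group n X\<^esub>}"
    using assms(2) unfolding quandle_boundaries_def by force
  have "quandle_homology X q n = chain_group n X Mod {\<one>\<^bsub>chain_group n X\<^esub>}"
    unfolding quandle_homology_def cy bd G.subgroup_generated_group_carrier ..
  then show ?thesis using G.trivial_factor_iso by (auto simp: is_iso_def)
qed

lemma discrete_const:
  assumes ss: "singular_simplex n X \<sigma>" and D: "X = discrete_topology (topspace X)"
    and u: "u \<in> standard_simplex n" and v: "v \<in> standard_simplex n"
  shows "\<sigma> v = \<sigma> u"
proof -
  have "connectedin X (\<sigma> ` standard_simplex n)"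
    using ss unfolding singular_simplex_def
    by (metis connectedin_continuous_map_image connectedin_standard_simplex
              connectedin_subtopology order_refl)
  then have "connectedin (discrete_topology (topspace X)) (\<sigma> ` standard_simplex n)"
    using D by simp
  then obtain a where "\<sigma> ` standard_simplex n \<subseteq> {a}"
    by (auto simp: connectedin_discrete_topology)
  then show ?thesis using u v by auto
qed

theorem mainTheorem4:
  fixes X :: "'a topology" and q :: "'a \<Rightarrow> 'a \<Rightarrow> 'a"
  assumes "topological_quandle X q"
  shows "(X = discrete_topology (topspace X) \<longrightarrow>
           (\<forall>n. \<forall>c \<in> carrier (chain_group n X). quandle_boundary q n c = 0) \<and>
           (\<forall>n. quandle_homology X q n \<cong> chain_group n X)) \<and>
         ((\<forall>x\<in>topspace X. \<forall>y\<in>topspace X. q x y = x) \<longrightarrow>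
           (\<forall>n. \<forall>c \<in> carrier (chain_group n X). quandle_boundary q n c = 0) \<and>
           (\<forall>n. quandle_homology X q n \<cong> chain_group n X))"
proof -
  have idem: "\<And>x. x \<in> topspace X \<Longrightarrow> q x x = x"
    using assms by (auto simp: topological_quandle_def quandle_on_def)
  have inS: "\<And>n \<sigma> u. singular_simplex n X \<sigma> \<Longrightarrow> u \<in> standard_simplex n \<Longrightarrow> \<sigma> u \<in> topspace X"
    by (auto simp: singular_simplex_def continuous_map_def)
  have gen: "(\<forall>n. \<forall>c \<in> carrier (chain_group n X). quandle_boundary q n c = 0) \<and>
           (\<forall>n. quandle_homology X q n \<cong> chain_group n X)"
    if H: "\<And>n \<sigma> k t. singular_simplex n X \<sigma> \<Longrightarrow> 1 \<le> n \<Longrightarrow> k \<in> {1..n} \<Longrightarrow>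
      t \<in> standard_simplex (n - 1) \<Longrightarrow>
      q (\<sigma> (simplical_face k t)) (\<sigma> (degen_map k t)) = \<sigma> (simplical_face k t)"
  proof -
    have A: "\<forall>n. \<forall>c \<in> carrier (chain_group n X). quandle_boundary q n c = 0"
    proof (intro allI ballI)
      fix n c assume "c \<in> carrier (chain_group n X)"
      then show "quandle_boundary q n c = 0"
        by (rule boundary_zero_if[rotated]) (rule H)
    qed
    then show ?thesis using homology_iso_if by blast
  qed
  show ?thesis
  proof (rule conjI; rule impI)
    assume D: "X = discrete_topology (topspace X)"
    show "(\<forall>n. \<forall>c \<in> carrier (chain_group n X). quandle_boundary q n c = 0) \<and>
           (\<forall>n. quandle_homology X q n \<cong> chain_group n X)"
    proof (rule gen)
      fix n \<sigma> k t
      assume ss: "singular_simplex n X \<sigma>" and n1: "1 \<le> n" and k: "k \<in> {1..n}"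
        and t: "t \<in> standard_simplex (n - 1)"
      have u: "simplical_face k t \<in> standard_simplex n"
        using simplical_face_in_standard_simplex[OF n1 _ ] k t by auto
      have v: "degen_map k t \<in> standard_simplex n"
        using degen_map_in_standard_simplex n1 k t by auto
      have e: "\<sigma> (degen_map k t) = \<sigma> (simplical_face k t)"
        using discrete_const[OF ss D u v] .
      show "q (\<sigma> (simplical_face k t)) (\<sigma> (degen_map k t)) = \<sigma> (simplical_face k t)"
        unfolding e using idem inS[OF ss u] by simp
    qed
  next
    assume T: "\<forall>x\<in>topspace X. \<forall>y\<in>topspace X. q x y = x"
    show "(\<forall>n. \<forall>c \<in> carrier (chain_group n X). quandle_boundary q n c = 0) \<and>
           (\<forall>n. quandle_homology X q n \<cong> chain_group n X)"
    proof (rule gen)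
      fix n \<sigma> k t
      assume ss: "singular_simplex n X \<sigma>" and n1: "1 \<le> n" and k: "k \<in> {1..n}"
        and t: "t \<in> standard_simplex (n - 1)"
      have u: "simplical_face k t \<in> standard_simplex n"
        using simplical_face_in_standard_simplex[OF n1 _ ] k t by auto
      have v: "degen_map k t \<in> standard_simplex n"
        using degen_map_in_standard_simplex n1 k t by auto
      show "q (\<sigma> (simplical_face k t)) (\<sigma> (degen_map k t)) = \<sigma> (simplical_face k t)"
        using T inS[OF ss u] inS[OF ss v] by simp
    qed
  qed
qed

end
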